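(* Let $(a_i)_{i\ge1}$ be a real sequence. Then $(a_i)_{i\ge1}$ is convex if and only if $$\sum_{i=1}^n\big(a_{\lfloor p_i\rfloor}-a_{\lfloor q_i\rfloor}\big)\le\sum_{i=1}^n\big(\{q_i\}\,\Delta a_{\lfloor q_i\rfloor}-\{p_i\}\,\Delta a_{\lfloor p_i\rfloor}\big)$$ holds for all $n\ge2$ and all $(p_1,\dots,p_n),(q_1,\dots,q_n)\in[1,\infty)^n$ with $(p_1,\dots,p_n)\prec(q_1,\dots,q_n)$.
   Context: $\Delta a_i=a_{i+1}-a_i$; a sequence is convex if $(\Delta a_i)_{i\ge1}$ is non-decreasing. $\lfloor x\rfloor$ is the floor and $\{x\}=x-\lfloor x\rfloor$ the fractional part. For $x,y\in\mathbb{R}^n$, with $x_{[1]}\ge\dots\ge x_{[n]}$ and $y_{[1]}\ge\dots\ge y_{[n]}$ the components in decreasing order, $x\prec y$ ($y$ majorizes $x$) means $\sum_{i=1}^k x_{[i]}\le\sum_{i=1}^k y_{[i]}$ for $k=1,\dots,n-1$ and $\sum_{i=1}^n x_i=\sum_{i=1}^n y_i$. *)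

theory Defs
  imports Complex_Main
begin

text \<open>Sequences (a_i)_{i>=1} are modelled as functions nat => real; the value at 0 is ignored.\<close>

definition fdiff :: "(nat \<Rightarrow> real) \<Rightarrow> nat \<Rightarrow> real" where
  "fdiff a i = a (Suc i) - a i"

definition convex_seq :: "(nat \<Rightarrow> real) \<Rightarrow> bool" where
  "convex_seq a \<longleftrightarrow> (\<forall>i\<ge>1. fdiff a i \<le> fdiff a (Suc i))"

text \<open>Decreasing rearrangement of a vector given as a list; x_[k] is (decr x) ! (k-1).\<close>
definition decr :: "real list \<Rightarrow> real list" where
  "decr x = rev (sort x)"

definition majorized :: "real list \<Rightarrow> real list \<Rightarrow> bool" where
  "majorized x y \<longleftrightarrow> length x = length y \<and>
     (\<forall>k\<in>{1..<length x}. sum_list (take k (decr x)) \<le> sum_list (take k (decr y))) \<and>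
     sum_list x = sum_list y"

end

theory Submission
  imports Defs "HOL-Library.Multiset"
begin

lemma sum_map_decr: "sum_list (map h (decr y)) = sum_list (map (h::real\<Rightarrow>real) y)"
proof -
  have "mset (decr y) = mset y" by (simp add: decr_def)
  hence "mset (map h (decr y)) = mset (map h y)" by simp
  thus ?thesis by (metis sum_mset_sum_list)
qed

lemma len_decr[simp]: "length (decr y) = length y" by (simp add: decr_def)

lemma sorted_decr: "sorted_wrt (\<ge>) (decr y)"
  by (simp add: decr_def sorted_wrt_rev)

lemma lower_bound:
  fixes y :: "real list"
  assumes "j \<le> length z"
  shows "sum_list (take j z) - real j * t \<le> sum_list (map (\<lambda>x. max 0 (x - t)) z)"
proof -
  have e: "sum_list (take j z) - real j * t = sum_list (map (\<lambda>x. x - t) (take j z))"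
    using assms by (simp add: sum_list_subtractf sum_list_triv)
  have "sum_list (map (\<lambda>x. x - t) (take j z)) \<le> sum_list (map (\<lambda>x. max 0 (x - t)) (take j z))"
    by (rule sum_list_mono) simp
  also have "\<dots> \<le> sum_list (map (\<lambda>x. max 0 (x - t)) (take j z)) + sum_list (map (\<lambda>x. max 0 (x - t)) (drop j z))"
  proof -
    have "0 \<le> sum_list (map (\<lambda>x. max 0 (x - t)) (drop j z))"
      by (rule sum_list_nonneg) clarsimp
    thus ?thesis by linarith
  qed
  also have "\<dots> = sum_list (map (\<lambda>x. max 0 (x - t)) z)"
    by (metis append_take_drop_id map_append sum_list_append)
  finally show ?thesis using e by simp
qed

lemma drop_le:
  fixes z :: "real list"
  assumes "sorted_wrt (\<ge>) z"
  shows "\<forall>w\<in>set (dropWhile (\<lambda>x. x > t) z). w \<le> t"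
  using assms
proof (induction z)
  case Nil then show ?case by simp
next
  case (Cons x z)
  show ?case
  proof (cases "x > t")
    case True then show ?thesis using Cons by simp
  next
    case False then show ?thesis using Cons.prems by fastforce
  qed
qed

lemma exact:
  fixes z :: "real list"
  assumes "sorted_wrt (\<ge>) z"
  shows "\<exists>j\<le>length z. sum_list (map (\<lambda>x. max 0 (x - t)) z) = sum_list (take j z) - real j * t"
proof -
  let ?P = "\<lambda>x. x > t"
  let ?h = "\<lambda>x. max 0 (x - t)"
  define j where "j = length (takeWhile ?P z)"
  have tk: "take j z = takeWhile ?P z"
    unfolding j_def by (metis append_eq_conv_conj takeWhile_dropWhile_id)
  have A: "sum_list (map ?h z) = sum_list (map ?h (takeWhile ?P z)) + sum_list (map ?h (dropWhile ?P z))"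
    by (metis map_append sum_list_append takeWhile_dropWhile_id)
  moreover have B: "sum_list (map ?h (dropWhile ?P z)) = 0"
  proof -
    have eq: "map ?h (dropWhile ?P z) = map (\<lambda>_. 0) (dropWhile ?P z)"
      using drop_le[OF assms, of t] by auto
    show ?thesis unfolding eq sum_list_triv by simp
  qed
  moreover have C: "map ?h (takeWhile ?P z) = map (\<lambda>x. x - t) (takeWhile ?P z)"
    by (auto dest: set_takeWhileD)
  moreover have D: "sum_list (map (\<lambda>x. x - t) (takeWhile ?P z)) = sum_list (takeWhile ?P z) - real j * t"
    by (simp add: sum_list_subtractf j_def sum_list_triv)
  moreover have E: "j \<le> length z" unfolding j_def by (simp add: length_takeWhile_le)
  ultimately show ?thesis using tk by (intro exI[of _ j]) simp
qed

lemma karamata_hinge: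
  fixes p q :: "real list"
  assumes "majorized p q"
  shows "sum_list (map (\<lambda>x. max 0 (x - t)) p) \<le> sum_list (map (\<lambda>x. max 0 (x - t)) q)"
proof -
  let ?h = "\<lambda>x. max 0 (x - t)"
  obtain j where j: "j \<le> length p"
    "sum_list (map ?h (decr p)) = sum_list (take j (decr p)) - real j * t"
    using exact[OF sorted_decr, of p t] by auto
  have len: "length p = length q" using assms by (simp add: majorized_def)
  have "sum_list (take j (decr p)) \<le> sum_list (take j (decr q))"
  proof (cases "j = 0")
    case True then show ?thesis by simp
  next
    case False
    show ?thesis
    proof (cases "j < length p")
      case True then show ?thesis using False assms by (auto simp: majorized_def)
    next
      case False
      hence "j = length p" using j by simp
      hence "take j (decr p) = decr p" "take j (decr q) = decr q" using len by simp_all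
      moreover have "sum_list (decr p) = sum_list p" "sum_list (decr q) = sum_list q"
        using sum_map_decr[of "\<lambda>x. x"] by simp_all
      ultimately show ?thesis using assms by (simp add: majorized_def)
    qed
  qed
  also have "sum_list (take j (decr q)) - real j * t \<le> sum_list (map ?h (decr q))"
    by (rule lower_bound) (use j len in simp)
  ultimately have "sum_list (map ?h (decr p)) \<le> sum_list (map ?h (decr q))" using j by linarith
  thus ?thesis by (simp add: sum_map_decr)
qed

lemma repr_aux:
  fixes a :: "nat \<Rightarrow> real"
  assumes "m \<ge> 1"
  shows "a 1 + fdiff a 1 * (t - 1) + (\<Sum>k\<in>{2..m}. (fdiff a k - fdiff a (k - 1)) * (t - real k))
     = a m + (t - real m) * fdiff a m"
  using assms
proof (induction m rule: dec_induct)
  case base then show ?case by simp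
next
  case (step m)
  have seq: "{2..Suc m} = insert (Suc m) {2..m}" using step(1) by (simp add: atLeastAtMostSuc_conv)
  have sp: "(\<Sum>k\<in>{2..Suc m}. (fdiff a k - fdiff a (k - 1)) * (t - real k)) =
     (fdiff a (Suc m) - fdiff a m) * (t - real (Suc m)) + (\<Sum>k\<in>{2..m}. (fdiff a k - fdiff a (k - 1)) * (t - real k))"
    unfolding seq using step by (subst sum.insert) simp_all
  have alg: "a m + (t - real m) * fdiff a m + (fdiff a (Suc m) - fdiff a m) * (t - real (Suc m))
     = a (Suc m) + (t - real (Suc m)) * fdiff a (Suc m)"
    unfolding fdiff_def of_nat_Suc by algebra
  show ?case using step.IH sp alg by linarith
qed

lemma repr:
  fixes a :: "nat \<Rightarrow> real" and x :: real
  assumes "1 \<le> x" "nat \<lfloor>x\<rfloor> \<le> N"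
  shows "a (nat \<lfloor>x\<rfloor>) + frac x * fdiff a (nat \<lfloor>x\<rfloor>) =
     a 1 + fdiff a 1 * (x - 1) + (\<Sum>k\<in>{2..N}. (fdiff a k - fdiff a (k - 1)) * max 0 (x - real k))"
proof -
  define m where "m = nat \<lfloor>x\<rfloor>"
  have m1: "m \<ge> 1" using assms unfolding m_def by linarith
  have rm: "real m = of_int \<lfloor>x\<rfloor>" using assms unfolding m_def by simp
  have fr: "frac x = x - real m" using rm by (simp add: frac_def)
  have fl1: "real m \<le> x" using rm by linarith
  have fl2: "x < real m + 1" using rm by linarith
  have "(\<Sum>k\<in>{2..N}. (fdiff a k - fdiff a (k - 1)) * max 0 (x - real k))
      = (\<Sum>k\<in>{2..N}. if k \<in> {2..m} then (fdiff a k - fdiff a (k - 1)) * (x - real k) else 0)"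
  proof (rule sum.cong)
    fix k assume k: "k \<in> {2..N}"
    show "(fdiff a k - fdiff a (k - 1)) * max 0 (x - real k) =
      (if k \<in> {2..m} then (fdiff a k - fdiff a (k - 1)) * (x - real k) else 0)"
    proof (cases "k \<le> m")
      case True then have "real k \<le> x" using fl1 by linarith
      hence "max 0 (x - real k) = x - real k" by simp
      moreover have "k \<in> {2..m}" using True k by simp
      ultimately show ?thesis by simp
    next
      case False then have "x \<le> real k" using fl2 by linarith
      hence "max 0 (x - real k) = 0" by simp
      moreover have "(k \<in> {2..m}) = False" using False by simp
      ultimately show ?thesis by (simp only: if_False mult_zero_right)
    qed
  qed simp
  also have "\<dots> = (\<Sum>k\<in>{2..m}. (fdiff a k - fdiff a (k - 1)) * (x - real k))"
  proof -
    have se: "{k\<in>{2..N}. k \<in> {2..m}} = {2..m}" using assms(2) unfolding m_def by auto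
    show ?thesis
      using sum.inter_filter[of "{2..N}" "\<lambda>k. (fdiff a k - fdiff a (k - 1)) * (x - real k)" "\<lambda>k. k \<in> {2..m}"]
      unfolding se by simp
  qed
  finally have S: "(\<Sum>k\<in>{2..N}. (fdiff a k - fdiff a (k - 1)) * max 0 (x - real k)) = (\<Sum>k\<in>{2..m}. (fdiff a k - fdiff a (k - 1)) * (x - real k))" .
  have F: "frac x * fdiff a m = (x - real m) * fdiff a m" by (simp add: fr)
  show ?thesis unfolding m_def[symmetric] using repr_aux[OF m1, of a x] S F by linarith
qed


lemma sum_nth_map: "length p = n \<Longrightarrow> (\<Sum>i<n. g (p ! i)) = sum_list (map g p)"
  by (simp add: sum_list_sum_nth atLeast0LessThan)

lemma forward:
  fixes a :: "nat \<Rightarrow> real" and p q :: "real list"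
  assumes cv: "convex_seq a" and lp: "length p = n" and lq: "length q = n"
    and p1: "\<forall>x\<in>set p. 1 \<le> x" and q1: "\<forall>x\<in>set q. 1 \<le> x" and mj: "majorized p q"
  shows "(\<Sum>i<n. a (nat \<lfloor>p ! i\<rfloor>) + frac (p ! i) * fdiff a (nat \<lfloor>p ! i\<rfloor>))
       \<le> (\<Sum>i<n. a (nat \<lfloor>q ! i\<rfloor>) + frac (q ! i) * fdiff a (nat \<lfloor>q ! i\<rfloor>))"
proof -
  define N where "N = (\<Sum>i<n. nat \<lfloor>p ! i\<rfloor>) + (\<Sum>i<n. nat \<lfloor>q ! i\<rfloor>)"
  define c where "c k = fdiff a k - fdiff a (k - 1)" for k
  define h where "h k x = max 0 (x - real k)" for k x
  define A where "A x = a 1 + fdiff a 1 * (x - 1)" for x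
  have Np: "nat \<lfloor>p ! i\<rfloor> \<le> N" if "i < n" for i
  proof -
    have "nat \<lfloor>p ! i\<rfloor> \<le> (\<Sum>i<n. nat \<lfloor>p ! i\<rfloor>)"
      by (rule member_le_sum) (use that in auto)
    thus ?thesis unfolding N_def by linarith
  qed
  have Nq: "nat \<lfloor>q ! i\<rfloor> \<le> N" if "i < n" for i
  proof -
    have "nat \<lfloor>q ! i\<rfloor> \<le> (\<Sum>i<n. nat \<lfloor>q ! i\<rfloor>)"
      by (rule member_le_sum) (use that in auto)
    thus ?thesis unfolding N_def by linarith
  qed
  have decomp: "(\<Sum>i<n. a (nat \<lfloor>r ! i\<rfloor>) + frac (r ! i) * fdiff a (nat \<lfloor>r ! i\<rfloor>))
      = (\<Sum>i<n. A (r ! i)) + (\<Sum>k\<in>{2..N}. c k * (\<Sum>i<n. h k (r ! i)))"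
    if r1: "\<forall>x\<in>set r. 1 \<le> x" and lr: "length r = n" and rN: "\<And>i. i < n \<Longrightarrow> nat \<lfloor>r ! i\<rfloor> \<le> N" for r
  proof -
    have "(\<Sum>i<n. a (nat \<lfloor>r ! i\<rfloor>) + frac (r ! i) * fdiff a (nat \<lfloor>r ! i\<rfloor>))
       = (\<Sum>i<n. A (r ! i) + (\<Sum>k\<in>{2..N}. c k * h k (r ! i)))"
    proof (rule sum.cong)
      fix i assume "i \<in> {..<n}"
      hence i: "i < n" by simp
      have "1 \<le> r ! i" using r1 lr i by auto
      from repr[OF this rN[OF i], of a]
      show "a (nat \<lfloor>r ! i\<rfloor>) + frac (r ! i) * fdiff a (nat \<lfloor>r ! i\<rfloor>) = A (r ! i) + (\<Sum>k\<in>{2..N}. c k * h k (r ! i))"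
        unfolding A_def c_def h_def by simp
    qed simp
    also have "\<dots> = (\<Sum>i<n. A (r ! i)) + (\<Sum>i<n. \<Sum>k\<in>{2..N}. c k * h k (r ! i))"
      by (rule sum.distrib)
    also have "(\<Sum>i<n. \<Sum>k\<in>{2..N}. c k * h k (r ! i)) = (\<Sum>k\<in>{2..N}. \<Sum>i<n. c k * h k (r ! i))"
      by (rule sum.swap)
    also have "\<dots> = (\<Sum>k\<in>{2..N}. c k * (\<Sum>i<n. h k (r ! i)))"
      by (simp add: sum_distrib_left)
    finally show ?thesis .
  qed
  have Aeq: "(\<Sum>i<n. A (p ! i)) = (\<Sum>i<n. A (q ! i))"
  proof -
    have "(\<Sum>i<n. A (r ! i)) = real n * (a 1 - fdiff a 1) + fdiff a 1 * sum_list r" if "length r = n" for r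
    proof -
      have "(\<Sum>i<n. A (r ! i)) = (\<Sum>i<n. (a 1 - fdiff a 1) + fdiff a 1 * r ! i)"
        unfolding A_def by (simp add: algebra_simps)
      also have "\<dots> = real n * (a 1 - fdiff a 1) + fdiff a 1 * (\<Sum>i<n. r ! i)"
        by (simp add: sum.distrib sum_distrib_left)
      also have "(\<Sum>i<n. r ! i) = sum_list r" using sum_nth_map[OF that, of "\<lambda>x. x"] by simp
      finally show ?thesis .
    qed
    moreover have "sum_list p = sum_list q" using mj by (simp add: majorized_def)
    ultimately show ?thesis using lp lq by simp
  qed
  have hle: "(\<Sum>k\<in>{2..N}. c k * (\<Sum>i<n. h k (p ! i))) \<le> (\<Sum>k\<in>{2..N}. c k * (\<Sum>i<n. h k (q ! i)))"
  proof (rule sum_mono)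
    fix k assume k: "k \<in> {2..N}"
    have "c k \<ge> 0"
    proof -
      have "k - 1 \<ge> 1" using k by auto
      hence "fdiff a (k - 1) \<le> fdiff a (Suc (k - 1))" using cv unfolding convex_seq_def by blast
      moreover have "Suc (k - 1) = k" using k by auto
      ultimately show ?thesis unfolding c_def by simp
    qed
    moreover have "(\<Sum>i<n. h k (p ! i)) \<le> (\<Sum>i<n. h k (q ! i))"
    proof -
      have "sum_list (map (h k) p) \<le> sum_list (map (h k) q)"
        using karamata_hinge[OF mj, of "real k"] unfolding h_def by simp
      thus ?thesis using sum_nth_map[OF lp, of "h k"] sum_nth_map[OF lq, of "h k"] by simp
    qed
    ultimately show "c k * (\<Sum>i<n. h k (p ! i)) \<le> c k * (\<Sum>i<n. h k (q ! i))"
      by (rule mult_left_mono[rotated])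
  qed
  show ?thesis
    using decomp[OF p1 lp Np] decomp[OF q1 lq Nq] Aeq hle by linarith
qed

lemma backward:
  fixes a :: "nat \<Rightarrow> real"
  assumes H: "\<forall>n\<ge>2. \<forall>p q :: real list.
       length p = n \<and> length q = n \<and> (\<forall>x\<in>set p. 1 \<le> x) \<and> (\<forall>x\<in>set q. 1 \<le> x)
       \<and> majorized p q \<longrightarrow>
       (\<Sum>i<n. a (nat \<lfloor>p ! i\<rfloor>) - a (nat \<lfloor>q ! i\<rfloor>))
         \<le> (\<Sum>i<n. frac (q ! i) * fdiff a (nat \<lfloor>q ! i\<rfloor>) - frac (p ! i) * fdiff a (nat \<lfloor>p ! i\<rfloor>))"
  shows "convex_seq a"
  unfolding convex_seq_def
proof (intro allI impI)
  fix i :: nat assume i: "1 \<le> i"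
  define p where "p = [real (Suc i), real (Suc i)]"
  define q where "q = [real (Suc (Suc i)), real i]"
  have dp: "decr p = [real (Suc i), real (Suc i)]" unfolding p_def decr_def by simp
  have dq: "decr q = [real (Suc (Suc i)), real i]" unfolding q_def decr_def by simp
  have mj: "majorized p q" unfolding majorized_def dp dq by (simp add: p_def q_def)
  have "(\<Sum>i<2. a (nat \<lfloor>p ! i\<rfloor>) - a (nat \<lfloor>q ! i\<rfloor>))
         \<le> (\<Sum>i<2. frac (q ! i) * fdiff a (nat \<lfloor>q ! i\<rfloor>) - frac (p ! i) * fdiff a (nat \<lfloor>p ! i\<rfloor>))"
    using H mj i by (auto simp: p_def q_def)
  moreover have "frac (1 + real i) = 0" "frac (2 + real i) = 0" "frac (real i) = 0"
    "nat (1 + int i) = Suc i" "nat (2 + int i) = Suc (Suc i)"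
    by (simp_all add: frac_def)
  ultimately have "a (Suc i) - a (Suc (Suc i)) + (a (Suc i) - a i) \<le> 0"
    by (simp add: p_def q_def numeral_2_eq_2 lessThan_Suc)
  thus "fdiff a i \<le> fdiff a (Suc i)" by (simp add: fdiff_def)
qed

theorem theorem4p7:
  fixes a :: "nat \<Rightarrow> real"
  shows "convex_seq a \<longleftrightarrow>
    (\<forall>n\<ge>2. \<forall>p q :: real list.
       length p = n \<and> length q = n \<and> (\<forall>x\<in>set p. 1 \<le> x) \<and> (\<forall>x\<in>set q. 1 \<le> x)
       \<and> majorized p q \<longrightarrow>
       (\<Sum>i<n. a (nat \<lfloor>p ! i\<rfloor>) - a (nat \<lfloor>q ! i\<rfloor>))
         \<le> (\<Sum>i<n. frac (q ! i) * fdiff a (nat \<lfloor>q ! i\<rfloor>) - frac (p ! i) * fdiff a (nat \<lfloor>p ! i\<rfloor>)))"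
proof
  assume cv: "convex_seq a"
  show "\<forall>n\<ge>2. \<forall>p q :: real list.
       length p = n \<and> length q = n \<and> (\<forall>x\<in>set p. 1 \<le> x) \<and> (\<forall>x\<in>set q. 1 \<le> x)
       \<and> majorized p q \<longrightarrow>
       (\<Sum>i<n. a (nat \<lfloor>p ! i\<rfloor>) - a (nat \<lfloor>q ! i\<rfloor>))
         \<le> (\<Sum>i<n. frac (q ! i) * fdiff a (nat \<lfloor>q ! i\<rfloor>) - frac (p ! i) * fdiff a (nat \<lfloor>p ! i\<rfloor>))"
  proof (intro allI impI)
    fix n :: nat and p q :: "real list"
    assume "2 \<le> n" and c: "length p = n \<and> length q = n \<and> (\<forall>x\<in>set p. 1 \<le> x) \<and> (\<forall>x\<in>set q. 1 \<le> x) \<and> majorized p q"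
    have F: "(\<Sum>i<n. a (nat \<lfloor>p ! i\<rfloor>) + frac (p ! i) * fdiff a (nat \<lfloor>p ! i\<rfloor>))
       \<le> (\<Sum>i<n. a (nat \<lfloor>q ! i\<rfloor>) + frac (q ! i) * fdiff a (nat \<lfloor>q ! i\<rfloor>))"
      using forward[OF cv] c by blast
    thus "(\<Sum>i<n. a (nat \<lfloor>p ! i\<rfloor>) - a (nat \<lfloor>q ! i\<rfloor>))
         \<le> (\<Sum>i<n. frac (q ! i) * fdiff a (nat \<lfloor>q ! i\<rfloor>) - frac (p ! i) * fdiff a (nat \<lfloor>p ! i\<rfloor>))"
      by (simp add: sum_subtractf sum.distrib)
  qed
next
  assume H: "\<forall>n\<ge>2. \<forall>p q :: real list.
       length p = n \<and> length q = n \<and> (\<forall>x\<in>set p. 1 \<le> x) \<and> (\<forall>x\<in>set q. 1 \<le> x)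
       \<and> majorized p q \<longrightarrow>
       (\<Sum>i<n. a (nat \<lfloor>p ! i\<rfloor>) - a (nat \<lfloor>q ! i\<rfloor>))
         \<le> (\<Sum>i<n. frac (q ! i) * fdiff a (nat \<lfloor>q ! i\<rfloor>) - frac (p ! i) * fdiff a (nat \<lfloor>p ! i\<rfloor>))"
  show "convex_seq a" by (rule backward[OF H])
qed

end
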